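(* Let $\rho$ be a state of $n$ qubits, $r\ge0$ an integer, $\eta\in(0,1]$. Define $$W_r^*=\inf\Big\{\beta^{-1}\sum_{i\in\mathcal W}\log\operatorname{tr}(\Gamma_i)\ :\ \mathcal W\subseteq\{1,\dots,n\},\ \mathcal E_1,\dots,\mathcal E_r\in\mathcal T,\ \langle0^n|\mathcal E(\rho)|0^n\rangle\ge\eta\Big\},$$ where $\mathcal E=\big(\prod_{i\in\mathcal W}R_i\big)\circ\mathcal E_r\circ\cdots\circ\mathcal E_1$. Then $\beta W_r^*=-D^{r,\eta}_h(\rho\|\Gamma)$, and consequently $$-D^{r,\eta}_H(\rho\|\Gamma)-\log(1/\eta)\le\beta W_r^*\le-D^{r,\eta}_H(\rho\|\Gamma).$$
   Context: All logarithms are natural. Consider $n$ qubits; qubit $i$ has Hamiltonian $H_i$ with $H_i|0\rangle=0$, $H_i|1\rangle=E_i|1\rangle$, $E_i\ge0$. Fix $\beta>0$, and let $\Gamma_i=e^{-\beta H_i}$, $\Gamma=\bigotimes_{i=1}^n\Gamma_i$. Let $\mathcal T$ be a set of completely positive trace-preserving maps on the $n$ qubits, containing the identity map, such that $\mathcal F(\Gamma)=\Gamma$ for every $\mathcal F\in\mathcal T$. $R_i$ denotes the reset of qubit $i$: $R_i(X)=|0\rangle\langle0|_i\otimes\operatorname{tr}_i(X)$. Let $\mathcal P_0=\{\bigotimes_{i=1}^n Q_i: Q_i\in\{|0\rangle\langle0|,\mathbb 1_2\}\}$ and $\mathcal M^r=\{\mathcal E_1^\dagger\cdots\mathcal E_r^\dagger(P):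 P\in\mathcal P_0,\ \mathcal E_j\in\mathcal T\}$ (Hilbert–Schmidt adjoints). For a state $\rho$ and positive semidefinite $\Gamma$: the reduced complexity relative entropy is $D^{r,\eta}_h(\rho\|\Gamma)=-\log\inf\{\operatorname{tr}(Q\Gamma): Q\in\mathcal M^r,\operatorname{tr}(Q\rho)\ge\eta\}$, and the complexity relative entropy is $D^{r,\eta}_H(\rho\|\Gamma)=-\log\inf\{\operatorname{tr}(Q\Gamma)/\operatorname{tr}(Q\rho): Q\in\mathcal M^r,\operatorname{tr}(Q\rho)\ge\eta\}$. *)

theory Defs
  imports Complex_Main "Jordan_Normal_Form.Matrix"
begin

text \<open>Operators on n qubits are complex 2^n x 2^n matrices. Computational basis index
k in {0..<2^n}; qubit i (i in {0..<n}, i.e. qubit i+1 of the paper) of basis state k is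
the bit (k div 2^i) mod 2.\<close>

definition qbit :: "nat \<Rightarrow> nat \<Rightarrow> nat" where
  "qbit i k = (k div 2 ^ i) mod 2"

definition trace :: "complex mat \<Rightarrow> complex" where
  "trace A = (\<Sum>i<dim_row A. A $$ (i, i))"

definition dagger :: "complex mat \<Rightarrow> complex mat" where
  "dagger A = mat (dim_col A) (dim_row A) (\<lambda>(i, j). cnj (A $$ (j, i)))"

definition psd :: "complex mat \<Rightarrow> bool" where
  "psd A \<longleftrightarrow> dim_row A = dim_col A \<and>
     (\<forall>v \<in> carrier_vec (dim_row A).
        let z = (\<Sum>i<dim_row A. \<Sum>j<dim_row A. cnj (v $ i) * A $$ (i, j) * v $ j)
        in Im z = 0 \<and> Re z \<ge> 0)"

definition is_state :: "nat \<Rightarrow> complex mat \<Rightarrow> bool" where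
  "is_state n \<rho> \<longleftrightarrow> \<rho> \<in> carrier_mat (2^n) (2^n) \<and> psd \<rho> \<and> trace \<rho> = 1"

definition tensor_qubits :: "nat \<Rightarrow> (nat \<Rightarrow> complex mat) \<Rightarrow> complex mat" where
  "tensor_qubits n Q = mat (2^n) (2^n) (\<lambda>(k, l). \<Prod>i<n. Q i $$ (qbit i k, qbit i l))"

definition proj0 :: "complex mat" where
  "proj0 = mat 2 2 (\<lambda>(a, b). if a = 0 \<and> b = 0 then 1 else 0)"

text \<open>Gamma_i = exp(-beta H_i) with H_i = diag(0, E_i) (diagonal, so the exponential is
entrywise on the diagonal).\<close>
definition gamma_q :: "real \<Rightarrow> real \<Rightarrow> complex mat" where
  "gamma_q \<beta> Ei = mat 2 2 (\<lambda>(a, b). if a = b then (if a = 0 then 1 else complex_of_real (exp (- \<beta> * Ei))) else 0)"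

definition Gamma :: "nat \<Rightarrow> real \<Rightarrow> (nat \<Rightarrow> real) \<Rightarrow> complex mat" where
  "Gamma n \<beta> E = tensor_qubits n (\<lambda>i. gamma_q \<beta> (E i))"

text \<open>Linear maps on d x d matrices and complete positivity: (id_m \<otimes> F) maps PSD
matrices on C^m \<otimes> C^d to PSD matrices, for every m.\<close>
definition ampl :: "nat \<Rightarrow> nat \<Rightarrow> (complex mat \<Rightarrow> complex mat) \<Rightarrow> complex mat \<Rightarrow> complex mat" where
  "ampl m d F X = mat (m * d) (m * d) (\<lambda>(p, q).
      F (mat d d (\<lambda>(k, l). X $$ ((p div d) * d + k, (q div d) * d + l))) $$ (p mod d, q mod d))"

definition cptp :: "nat \<Rightarrow> (complex mat \<Rightarrow> complex mat) \<Rightarrow> bool" where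
  "cptp n F \<longleftrightarrow>
     (\<forall>X \<in> carrier_mat (2^n) (2^n). F X \<in> carrier_mat (2^n) (2^n)) \<and>
     (\<forall>X \<in> carrier_mat (2^n) (2^n). \<forall>Y \<in> carrier_mat (2^n) (2^n). F (X + Y) = F X + F Y) \<and>
     (\<forall>X \<in> carrier_mat (2^n) (2^n). \<forall>c. F (c \<cdot>\<^sub>m X) = c \<cdot>\<^sub>m F X) \<and>
     (\<forall>X \<in> carrier_mat (2^n) (2^n). trace (F X) = trace X) \<and>
     (\<forall>m. \<forall>X \<in> carrier_mat (m * 2^n) (m * 2^n). psd X \<longrightarrow> psd (ampl m (2^n) F X))"

definition hs_adjoint :: "nat \<Rightarrow> (complex mat \<Rightarrow> complex mat) \<Rightarrow> complex mat \<Rightarrow> complex mat" where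
  "hs_adjoint n F Y = (THE Z. Z \<in> carrier_mat (2^n) (2^n) \<and>
      (\<forall>X \<in> carrier_mat (2^n) (2^n). trace (dagger Z * X) = trace (dagger Y * F X)))"

text \<open>chain Es r = E_r o ... o E_1 where E_(j+1) = Es j.\<close>
fun chain :: "(nat \<Rightarrow> 'a \<Rightarrow> 'a) \<Rightarrow> nat \<Rightarrow> 'a \<Rightarrow> 'a" where
  "chain Es 0 = id"
| "chain Es (Suc j) = Es j \<circ> chain Es j"

text \<open>adj_chain n Es r = E_1^dagger o ... o E_r^dagger.\<close>
fun adj_chain :: "nat \<Rightarrow> (nat \<Rightarrow> complex mat \<Rightarrow> complex mat) \<Rightarrow> nat \<Rightarrow> complex mat \<Rightarrow> complex mat" where
  "adj_chain n Es 0 = id"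
| "adj_chain n Es (Suc j) = adj_chain n Es j \<circ> hs_adjoint n (Es j)"

text \<open>Reset of qubit i: R_i(X) = |0><0|_i \<otimes> tr_i(X), written out entrywise.\<close>
definition reset :: "nat \<Rightarrow> nat \<Rightarrow> complex mat \<Rightarrow> complex mat" where
  "reset n i X = mat (2^n) (2^n) (\<lambda>(k, l).
     if qbit i k = 0 \<and> qbit i l = 0 then X $$ (k, l) + X $$ (k + 2^i, l + 2^i) else 0)"

text \<open>Product of the resets R_i over i in W (they commute).\<close>
definition resets :: "nat \<Rightarrow> nat set \<Rightarrow> complex mat \<Rightarrow> complex mat" where
  "resets n W = foldr (\<lambda>i f. reset n i \<circ> f) (sorted_list_of_set W) id"

definition P0 :: "nat \<Rightarrow> complex mat set" where
  "P0 n = {tensor_qubits n Q | Q. \<forall>i<n. Q i = proj0 \<or> Q i = 1\<^sub>m 2}"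

definition Mr :: "nat \<Rightarrow> (complex mat \<Rightarrow> complex mat) set \<Rightarrow> nat \<Rightarrow> complex mat set" where
  "Mr n T r = {adj_chain n Es r P | Es P. (\<forall>j<r. Es j \<in> T) \<and> P \<in> P0 n}"

definition D_h :: "nat \<Rightarrow> (complex mat \<Rightarrow> complex mat) set \<Rightarrow> nat \<Rightarrow> real \<Rightarrow> complex mat \<Rightarrow> complex mat \<Rightarrow> real" where
  "D_h n T r \<eta> \<rho> G = - ln (Inf {Re (trace (Q * G)) | Q. Q \<in> Mr n T r \<and> Re (trace (Q * \<rho>)) \<ge> \<eta>})"

definition D_H :: "nat \<Rightarrow> (complex mat \<Rightarrow> complex mat) set \<Rightarrow> nat \<Rightarrow> real \<Rightarrow> complex mat \<Rightarrow> complex mat \<Rightarrow> real" where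
  "D_H n T r \<eta> \<rho> G = - ln (Inf {Re (trace (Q * G)) / Re (trace (Q * \<rho>)) | Q. Q \<in> Mr n T r \<and> Re (trace (Q * \<rho>)) \<ge> \<eta>})"

definition W_star :: "nat \<Rightarrow> real \<Rightarrow> (nat \<Rightarrow> real) \<Rightarrow> (complex mat \<Rightarrow> complex mat) set \<Rightarrow> nat \<Rightarrow> real \<Rightarrow> complex mat \<Rightarrow> real" where
  "W_star n \<beta> E T r \<eta> \<rho> = Inf {(1 / \<beta>) * (\<Sum>i\<in>W. ln (Re (trace (gamma_q \<beta> (E i))))) | W Es.
      W \<subseteq> {..<n} \<and> (\<forall>j<r. Es j \<in> T) \<and> Re ((resets n W \<circ> chain Es r) \<rho> $$ (0, 0)) \<ge> \<eta>}"

end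

theory Submission
  imports Defs
begin

lemma qbit_bit: "qbit i k = of_bool (bit k i)"
  by (simp add: qbit_def bit_iff_odd odd_iff_mod_2_eq_one even_iff_mod_2_eq_zero)

lemma qbit_lt2: "qbit i k < 2" by (simp add: qbit_def)
lemma qbit_cases: "qbit i k = 0 \<or> qbit i k = 1" by (simp add: qbit_bit)

lemma qbit_add: assumes "qbit i k = 0"
  shows "qbit i (k + 2^i) = 1" and "j \<noteq> i \<Longrightarrow> qbit j (k + 2^i) = qbit j k"
proof -
  have nb: "\<not> bit k i" using assms by (simp add: qbit_bit)
  have e: "k + 2^i = set_bit i k" using set_bit_eq[of i k] nb by simp
  show "qbit i (k + 2^i) = 1" unfolding e qbit_bit by (simp add: bit_set_bit_iff)
  show "j \<noteq> i \<Longrightarrow> qbit j (k + 2^i) = qbit j k" unfolding e qbit_bit by (auto simp add: bit_set_bit_iff)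
qed

lemma qbit_high: "k < 2^n \<Longrightarrow> n \<le> i \<Longrightarrow> qbit i k = 0"
proof -
  assume "k < 2^n" "n \<le> i"
  then have "k < 2^i" by (meson le_less_trans nat_less_le one_le_numeral power_increasing not_le)
  then show ?thesis by (simp add: qbit_def)
qed

lemma bits_eq: assumes "k < 2^n" "l < 2^n" "\<forall>i<n. qbit i k = qbit i l" shows "k = l"
proof (rule bit_eqI)
  fix i show "bit k i = bit l i"
  proof (cases "i < n")
    case True then have "qbit i k = qbit i l" using assms(3) by simp
    then show ?thesis by (cases "bit k i"; cases "bit l i") (auto simp: qbit_bit)
  next
    case False then show ?thesis using qbit_high[OF assms(1)] qbit_high[OF assms(2)] by (auto simp: qbit_bit)
  qed
qed

lemma add_bit_lt: assumes "k < 2^n" "i < n" "qbit i k = 0" shows "k + 2^i < 2^n"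
proof -
  have nb: "\<not> bit k i" using assms by (simp add: qbit_bit)
  have e: "k + 2^i = set_bit i k" using set_bit_eq[of i k] nb by simp
  have hk: "j \<ge> n \<Longrightarrow> \<not> bit k j" for j using qbit_high[OF assms(1), of j] by (simp add: qbit_bit)
  have "take_bit n (set_bit i k) = set_bit i k"
  proof (rule bit_eqI)
    fix j show "bit (take_bit n (set_bit i k)) j = bit (set_bit i k) j"
      using hk[of j] assms(2) by (cases "n \<le> j") (auto simp: bit_take_bit_iff bit_set_bit_iff)
  qed
  then show ?thesis unfolding e by (metis take_bit_nat_less_exp)
qed

lemma sum_prod_bits:
  fixes f :: "nat \<Rightarrow> nat \<Rightarrow> 'a::comm_semiring_1"
  shows "(\<Sum>k<2^n. \<Prod>i<n. f i (qbit i k)) = (\<Prod>i<n. f i 0 + f i 1)"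
proof (induction n)
  case 0 then show ?case by simp
next
  case (Suc n)
  have split: "{..<2^Suc n} = {..<(2::nat)^n} \<union> (\<lambda>k. k + 2^n) ` {..<2^n}" (is "_ = ?A \<union> ?B")
  proof
    show "{..<2^Suc n} \<subseteq> ?A \<union> ?B"
    proof
      fix k assume "k \<in> {..<(2::nat)^Suc n}"
      then show "k \<in> ?A \<union> ?B"
        by (cases "k < 2^n") (auto simp: image_iff intro!: bexI[of _ "k - 2^n"])
    qed
  qed auto
  have disj: "?A \<inter> ?B = {}" by auto
  have lo: "k < 2^n \<Longrightarrow> (\<Prod>i<Suc n. f i (qbit i k)) = f n 0 * (\<Prod>i<n. f i (qbit i k))" for k
    using qbit_high[of k n n] by (simp add: mult.commute)
  have hi: "k < 2^n \<Longrightarrow> (\<Prod>i<Suc n. f i (qbit i (k + 2^n))) = f n 1 * (\<Prod>i<n. f i (qbit i k))" for k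
  proof -
    assume k: "k < 2^n"
    have z: "qbit n k = 0" using qbit_high[OF k] by simp
    have "(\<Prod>i<n. f i (qbit i (k + 2^n))) = (\<Prod>i<n. f i (qbit i k))"
      by (rule prod.cong) (auto simp: qbit_add(2)[OF z])
    then show ?thesis using qbit_add(1)[OF z] by (simp add: mult.commute)
  qed
  have "(\<Sum>k<2^Suc n. \<Prod>i<Suc n. f i (qbit i k))
      = (\<Sum>k\<in>?A. \<Prod>i<Suc n. f i (qbit i k)) + (\<Sum>k\<in>?B. \<Prod>i<Suc n. f i (qbit i k))"
    unfolding split by (rule sum.union_disjoint) (use disj in auto)
  also have "(\<Sum>k\<in>?B. \<Prod>i<Suc n. f i (qbit i k)) = (\<Sum>k\<in>?A. \<Prod>i<Suc n. f i (qbit i (k + 2^n)))"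
    by (subst sum.reindex) (auto simp: inj_on_def)
  also have "\<dots> = (\<Sum>k\<in>?A. f n 1 * (\<Prod>i<n. f i (qbit i k)))" by (intro sum.cong refl) (rule hi, simp)
  also have "(\<Sum>k\<in>?A. \<Prod>i<Suc n. f i (qbit i k)) = (\<Sum>k\<in>?A. f n 0 * (\<Prod>i<n. f i (qbit i k)))"
    by (intro sum.cong refl) (rule lo, simp)
  finally show ?case using Suc by (simp add: sum_distrib_left[symmetric] algebra_simps)
qed

lemma tensor_diag:
  assumes "\<forall>i<n. \<forall>a<2. \<forall>b<2. a \<noteq> b \<longrightarrow> Q i $$ (a,b) = 0" "k < 2^n" "l < 2^n"
  shows "tensor_qubits n Q $$ (k,l) = (if k = l then (\<Prod>i<n. Q i $$ (qbit i k, qbit i k)) else 0)"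
proof (cases "k = l")
  case True then show ?thesis using assms by (simp add: tensor_qubits_def)
next
  case False
  then obtain i where i: "i < n" "qbit i k \<noteq> qbit i l" using bits_eq[OF assms(2,3)] by blast
  have "Q i $$ (qbit i k, qbit i l) = 0" using assms(1) i qbit_lt2 by blast
  then have "(\<Prod>i<n. Q i $$ (qbit i k, qbit i l)) = 0" using i by (intro prod_zero) auto
  then show ?thesis using False assms by (simp add: tensor_qubits_def)
qed

lemma trace_diag_mult:
  assumes "A \<in> carrier_mat d d" "X \<in> carrier_mat d d"
    "\<And>k l. k < d \<Longrightarrow> l < d \<Longrightarrow> A $$ (k,l) = (if k = l then c k else 0)"
  shows "trace (A * X) = (\<Sum>k<d. c k * X $$ (k,k))"
proof -
  have "trace (A * X) = (\<Sum>k<d. \<Sum>j<d. A $$ (k,j) * X $$ (j,k))"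
    using assms(1,2) by (simp add: trace_def scalar_prod_def lessThan_atLeast0)
  also have "\<dots> = (\<Sum>k<d. \<Sum>j<d. (if j = k then c k * X $$ (k,k) else 0))"
    by (intro sum.cong refl) (auto simp: assms(3))
  finally show ?thesis by simp
qed

definition cW :: "nat set \<Rightarrow> nat \<Rightarrow> nat \<Rightarrow> complex" where
  "cW W i b = (if i \<in> W then 1 else if b = 0 then 1 else 0)"

definition PW :: "nat \<Rightarrow> nat set \<Rightarrow> complex mat" where
  "PW n W = tensor_qubits n (\<lambda>i. if i \<in> W then 1\<^sub>m 2 else proj0)"

lemma PW_carrier: "PW n W \<in> carrier_mat (2^n) (2^n)"
  by (simp add: PW_def tensor_qubits_def)

lemma PW_index: assumes "k < 2^n" "l < 2^n"
  shows "PW n W $$ (k,l) = (if k = l then (\<Prod>i<n. cW W i (qbit i k)) else 0)"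
proof -
  have "PW n W $$ (k,l) = (if k = l then (\<Prod>i<n. (if i \<in> W then 1\<^sub>m 2 else proj0) $$ (qbit i k, qbit i k)) else 0)"
    unfolding PW_def by (rule tensor_diag[OF _ assms]) (auto simp: proj0_def)
  also have "\<dots> = (if k = l then (\<Prod>i<n. cW W i (qbit i k)) else 0)"
    by (auto intro!: prod.cong simp: cW_def proj0_def qbit_lt2)
  finally show ?thesis .
qed

lemma cW_real: "cnj (cW W i b) = cW W i b" by (simp add: cW_def)

lemma PW_dagger: "dagger (PW n W) = PW n W"
proof (rule eq_matI)
  fix k l assume kl: "k < dim_row (PW n W)" "l < dim_col (PW n W)"
  then show "dagger (PW n W) $$ (k, l) = PW n W $$ (k, l)"
    using PW_carrier[of n W] by (auto simp: dagger_def PW_index cnj_prod cW_real)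
qed (use PW_carrier[of n W] in \<open>auto simp: dagger_def\<close>)

lemma trace_PW:
  assumes "X \<in> carrier_mat (2^n) (2^n)"
  shows "trace (PW n W * X) = (\<Sum>k<2^n. (\<Prod>i<n. cW W i (qbit i k)) * X $$ (k,k))"
  by (rule trace_diag_mult[OF PW_carrier assms]) (simp add: PW_index)

definition gq :: "real \<Rightarrow> (nat \<Rightarrow> real) \<Rightarrow> nat \<Rightarrow> nat \<Rightarrow> complex" where
  "gq \<beta> E i b = (if b = 0 then 1 else complex_of_real (exp (- \<beta> * E i)))"

lemma Gamma_carrier: "Gamma n \<beta> E \<in> carrier_mat (2^n) (2^n)"
  by (simp add: Gamma_def tensor_qubits_def)

lemma Gamma_index: assumes "k < 2^n" "l < 2^n"
  shows "Gamma n \<beta> E $$ (k,l) = (if k = l then (\<Prod>i<n. gq \<beta> E i (qbit i k)) else 0)"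
proof -
  have "Gamma n \<beta> E $$ (k,l) = (if k = l then (\<Prod>i<n. gamma_q \<beta> (E i) $$ (qbit i k, qbit i k)) else 0)"
    unfolding Gamma_def by (rule tensor_diag[OF _ assms]) (auto simp: gamma_q_def)
  also have "\<dots> = (if k = l then (\<Prod>i<n. gq \<beta> E i (qbit i k)) else 0)"
    by (auto intro!: prod.cong simp: gq_def gamma_q_def qbit_lt2)
  finally show ?thesis .
qed

lemma Gamma_herm: "k < 2^n \<Longrightarrow> l < 2^n \<Longrightarrow> Gamma n \<beta> E $$ (k,l) = cnj (Gamma n \<beta> E $$ (l,k))"
  by (auto simp: Gamma_index cnj_prod gq_def intro!: prod.cong)

lemma trace_gamma_q: "Re (trace (gamma_q \<beta> Ei)) = 1 + exp (- \<beta> * Ei)"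
proof -
  have "trace (gamma_q \<beta> Ei) = (\<Sum>i<2. gamma_q \<beta> Ei $$ (i,i))" by (simp add: trace_def gamma_q_def)
  also have "\<dots> = gamma_q \<beta> Ei $$ (0,0) + gamma_q \<beta> Ei $$ (1,1)" by (simp add: numeral_2_eq_2)
  finally show ?thesis by (simp add: gamma_q_def)
qed

lemma trace_PW_Gamma:
  assumes "W \<subseteq> {..<n}"
  shows "trace (PW n W * Gamma n \<beta> E) = complex_of_real (\<Prod>i\<in>W. 1 + exp (- \<beta> * E i))"
proof -
  have "trace (PW n W * Gamma n \<beta> E) = (\<Sum>k<2^n. \<Prod>i<n. cW W i (qbit i k) * gq \<beta> E i (qbit i k))"
    by (simp add: trace_PW[OF Gamma_carrier] Gamma_index prod.distrib)
  also have "\<dots> = (\<Prod>i<n. cW W i 0 * gq \<beta> E i 0 + cW W i 1 * gq \<beta> E i 1)"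
    by (rule sum_prod_bits)
  also have "\<dots> = (\<Prod>i<n. if i \<in> W then complex_of_real (1 + exp (- \<beta> * E i)) else 1)"
    by (intro prod.cong refl) (simp add: cW_def gq_def)
  also have "\<dots> = (\<Prod>i\<in>W. complex_of_real (1 + exp (- \<beta> * E i)))"
    using assms by (simp add: prod.If_cases Int_absorb1)
  finally show ?thesis by simp
qed

definition fL :: "nat list \<Rightarrow> nat \<Rightarrow> nat \<Rightarrow> nat \<Rightarrow> complex" where
  "fL L k k' i = (if i \<in> set L then 1 else if qbit i k' = qbit i k then 1 else 0)"

definition cL :: "nat \<Rightarrow> nat list \<Rightarrow> nat \<Rightarrow> nat \<Rightarrow> complex" where
  "cL n L k k' = (\<Prod>i<n. fL L k k' i)"

lemma cL_step:
  assumes "i < n" "i \<notin> set L" "qbit i k = 0"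
  shows "cL n L k k' + cL n L (k + 2^i) k' = cL n (i # L) k k'"
proof -
  have fin: "finite {..<n}" by simp
  have ii: "i \<in> {..<n}" using assms by simp
  define R where "R = (\<Prod>j\<in>{..<n} - {i}. fL L k k' j)"
  have r1: "(\<Prod>j\<in>{..<n} - {i}. fL L (k + 2^i) k' j) = R"
    unfolding R_def by (rule prod.cong) (auto simp: fL_def qbit_add(2)[OF assms(3)])
  have r2: "(\<Prod>j\<in>{..<n} - {i}. fL (i#L) k k' j) = R"
    unfolding R_def by (rule prod.cong) (auto simp: fL_def)
  have e1: "cL n L k k' = fL L k k' i * R" unfolding cL_def R_def by (rule prod.remove[OF fin ii])
  have e2: "cL n L (k + 2^i) k' = fL L (k + 2^i) k' i * R" unfolding cL_def r1[symmetric] by (rule prod.remove[OF fin ii])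
  have e3: "cL n (i#L) k k' = fL (i#L) k k' i * R" unfolding cL_def r2[symmetric] by (rule prod.remove[OF fin ii])
  have s: "fL L k k' i + fL L (k + 2^i) k' i = 1"
    using assms qbit_add(1)[OF assms(3)] qbit_cases[of i k'] by (auto simp: fL_def)
  have "fL (i#L) k k' i = 1" by (simp add: fL_def)
  then show ?thesis unfolding e1 e2 e3 by (metis s distrib_right)
qed

lemma resets_list:
  assumes "distinct L" "set L \<subseteq> {..<n}" "k < 2^n" "\<forall>j\<in>set L. qbit j k = 0"
  shows "foldr (\<lambda>i f. reset n i \<circ> f) L id X $$ (k,k) = (\<Sum>k'<2^n. cL n L k k' * X $$ (k',k'))"
  using assms
proof (induction L arbitrary: k)
  case Nil
  have "cL n [] k k' = (if k' = k then 1 else 0)" if k': "k' < 2^n" for k'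
  proof (cases "k' = k")
    case True then show ?thesis by (simp add: cL_def fL_def)
  next
    case False
    then obtain i where i: "i < n" "qbit i k' \<noteq> qbit i k" using bits_eq[OF k' Nil.prems(3)] by blast
    then have "(\<Prod>i<n. fL [] k k' i) = 0" by (intro prod_zero) (auto simp: fL_def)
    then show ?thesis using False by (simp add: cL_def)
  qed
  then have "(\<Sum>k'<2^n. cL n [] k k' * X $$ (k',k')) = (\<Sum>k'<2^n. if k' = k then X $$ (k,k) else 0)"
    by (intro sum.cong refl) auto
  then show ?case using Nil by simp
next
  case (Cons i L)
  have i: "i < n" "i \<notin> set L" "qbit i k = 0" using Cons by auto
  have k2: "k + 2^i < 2^n" by (rule add_bit_lt) (use Cons i in auto)
  have IH1: "foldr (\<lambda>i f. reset n i \<circ> f) L id X $$ (k,k) = (\<Sum>k'<2^n. cL n L k k' * X $$ (k',k'))"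
    using Cons by (intro Cons.IH) auto
  have IH2: "foldr (\<lambda>i f. reset n i \<circ> f) L id X $$ (k + 2^i, k + 2^i) = (\<Sum>k'<2^n. cL n L (k+2^i) k' * X $$ (k',k'))"
  proof (rule Cons.IH)
    show "\<forall>j\<in>set L. qbit j (k + 2 ^ i) = 0"
    proof
      fix j assume j: "j \<in> set L"
      then have "j \<noteq> i" using i by auto
      then show "qbit j (k + 2 ^ i) = 0" using qbit_add(2)[OF i(3)] Cons.prems(4) j by simp
    qed
  qed (use Cons k2 in auto)
  have "foldr (\<lambda>i f. reset n i \<circ> f) (i # L) id X $$ (k,k)
     = foldr (\<lambda>i f. reset n i \<circ> f) L id X $$ (k,k) + foldr (\<lambda>i f. reset n i \<circ> f) L id X $$ (k + 2^i, k + 2^i)"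
    using Cons i by (simp add: reset_def)
  also have "\<dots> = (\<Sum>k'<2^n. (cL n L k k' + cL n L (k+2^i) k') * X $$ (k',k'))"
    unfolding IH1 IH2 by (simp add: sum.distrib algebra_simps)
  also have "\<dots> = (\<Sum>k'<2^n. cL n (i#L) k k' * X $$ (k',k'))"
    using cL_step[OF i] by simp
  finally show ?case .
qed

lemma resets_trace:
  assumes "W \<subseteq> {..<n}" "X \<in> carrier_mat (2^n) (2^n)"
  shows "resets n W X $$ (0,0) = trace (PW n W * X)"
proof -
  have fin: "finite W" using assms finite_subset by blast
  have "resets n W X $$ (0,0) = (\<Sum>k'<2^n. cL n (sorted_list_of_set W) 0 k' * X $$ (k',k'))"
    unfolding resets_def using fin assms by (intro resets_list) (auto simp: qbit_def)
  also have "\<dots> = trace (PW n W * X)"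
    unfolding trace_PW[OF assms(2)] using fin
    by (intro sum.cong refl) (auto simp: cL_def fL_def cW_def qbit_def intro!: prod.cong)
  finally show ?thesis .
qed

lemma trace_add: "A \<in> carrier_mat d d \<Longrightarrow> B \<in> carrier_mat d d \<Longrightarrow> trace (A + B) = trace A + trace B"
  by (simp add: trace_def sum.distrib)

lemma trace_smult: "A \<in> carrier_mat d d \<Longrightarrow> trace (c \<cdot>\<^sub>m A) = c * trace A"
  by (simp add: trace_def sum_distrib_left)

lemma trace_dagger_mult:
  assumes "Z \<in> carrier_mat d d" "X \<in> carrier_mat d d"
  shows "trace (dagger Z * X) = (\<Sum>p\<in>{..<d} \<times> {..<d}. cnj (Z $$ p) * X $$ p)"
proof -
  have "trace (dagger Z * X) = (\<Sum>i<d. \<Sum>k<d. cnj (Z $$ (k,i)) * X $$ (k,i))"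
    using assms by (simp add: trace_def dagger_def scalar_prod_def lessThan_atLeast0)
  also have "\<dots> = (\<Sum>k<d. \<Sum>i<d. cnj (Z $$ (k,i)) * X $$ (k,i))" by (rule sum.swap)
  also have "\<dots> = (\<Sum>p\<in>{..<d} \<times> {..<d}. cnj (Z $$ p) * X $$ p)"
    by (simp add: sum.cartesian_product)
  finally show ?thesis .
qed

definition Emat :: "nat \<Rightarrow> nat \<Rightarrow> nat \<Rightarrow> complex mat" where
  "Emat d a b = mat d d (\<lambda>(p,q). if p = a \<and> q = b then 1 else 0)"

definition Smat :: "nat \<Rightarrow> (nat \<times> nat) set \<Rightarrow> complex mat \<Rightarrow> complex mat" where
  "Smat d A X = mat d d (\<lambda>(p,q). if (p,q) \<in> A then X $$ (p,q) else 0)"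

lemma Emat_carrier: "Emat d a b \<in> carrier_mat d d" by (simp add: Emat_def)
lemma Smat_carrier: "Smat d A X \<in> carrier_mat d d" by (simp add: Smat_def)

lemma lin_rep_aux:
  assumes add: "\<And>X Y. X \<in> carrier_mat d d \<Longrightarrow> Y \<in> carrier_mat d d \<Longrightarrow> \<phi> (X + Y) = \<phi> X + \<phi> Y"
    and sm: "\<And>X c. X \<in> carrier_mat d d \<Longrightarrow> \<phi> (c \<cdot>\<^sub>m X) = c * \<phi> X"
    and fin: "finite A"
  shows "\<phi> (Smat d A X) = (\<Sum>p\<in>A \<inter> ({..<d} \<times> {..<d}). X $$ p * \<phi> (Emat d (fst p) (snd p)))"
  using fin
proof (induction A rule: finite_induct)
  case empty
  have "Smat d {} X = 0 \<cdot>\<^sub>m Smat d {} X" by (rule eq_matI) (auto simp: Smat_def)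
  then have "\<phi> (Smat d {} X) = 0 * \<phi> (Smat d {} X)" using sm[OF Smat_carrier] by metis
  then show ?case by simp
next
  case (insert p A)
  show ?case
  proof (cases "p \<in> {..<d} \<times> {..<d}")
    case True
    have e: "Smat d (insert p A) X = Smat d A X + X $$ p \<cdot>\<^sub>m Emat d (fst p) (snd p)"
      by (rule eq_matI) (use insert in \<open>auto simp: Smat_def Emat_def Emat_carrier\<close>)
    have "\<phi> (Smat d (insert p A) X) = \<phi> (Smat d A X) + X $$ p * \<phi> (Emat d (fst p) (snd p))"
      unfolding e by (simp add: add Smat_carrier Emat_carrier sm)
    moreover have "insert p A \<inter> ({..<d} \<times> {..<d}) = insert p (A \<inter> ({..<d} \<times> {..<d}))" using True by auto
    ultimately show ?thesis using insert by (simp add: add.commute)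
  next
    case False
    have e: "Smat d (insert p A) X = Smat d A X"
      by (rule eq_matI) (use False in \<open>auto simp: Smat_def\<close>)
    moreover have "insert p A \<inter> ({..<d} \<times> {..<d}) = A \<inter> ({..<d} \<times> {..<d})" using False by auto
    ultimately show ?thesis using insert by simp
  qed
qed

lemma lin_rep:
  assumes add: "\<And>X Y. X \<in> carrier_mat d d \<Longrightarrow> Y \<in> carrier_mat d d \<Longrightarrow> \<phi> (X + Y) = \<phi> X + \<phi> Y"
    and sm: "\<And>X c. X \<in> carrier_mat d d \<Longrightarrow> \<phi> (c \<cdot>\<^sub>m X) = c * \<phi> X"
  shows "\<exists>Z \<in> carrier_mat d d. \<forall>X \<in> carrier_mat d d. \<phi> X = trace (dagger Z * X)"
proof (intro bexI ballI)
  let ?Z = "mat d d (\<lambda>(a,b). cnj (\<phi> (Emat d a b)))"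
  show "?Z \<in> carrier_mat d d" by simp
  fix X :: "complex mat" assume X: "X \<in> carrier_mat d d"
  have "Smat d ({..<d} \<times> {..<d}) X = X" by (rule eq_matI) (use X in \<open>auto simp: Smat_def\<close>)
  then have "\<phi> X = (\<Sum>p\<in>{..<d} \<times> {..<d}. X $$ p * \<phi> (Emat d (fst p) (snd p)))"
    using lin_rep_aux[where d=d and \<phi>=\<phi> and A="{..<d} \<times> {..<d}" and X=X, OF add sm] by simp
  also have "\<dots> = (\<Sum>p\<in>{..<d} \<times> {..<d}. cnj (?Z $$ p) * X $$ p)"
    by (intro sum.cong refl) auto
  also have "\<dots> = trace (dagger ?Z * X)" by (rule trace_dagger_mult[symmetric]) (use X in auto)
  finally show "\<phi> X = trace (dagger ?Z * X)" .
qed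

lemma rep_unique:
  assumes "Z \<in> carrier_mat d d" "Z' \<in> carrier_mat d d"
    "\<forall>X \<in> carrier_mat d d. trace (dagger Z * X) = trace (dagger Z' * X)"
  shows "Z = Z'"
proof (rule eq_matI)
  fix a b assume ab: "a < dim_row Z'" "b < dim_col Z'"
  have key: "trace (dagger W * Emat d a b) = cnj (W $$ (a,b))" if W: "W \<in> carrier_mat d d" for W
  proof -
    have "trace (dagger W * Emat d a b) = (\<Sum>p\<in>{..<d} \<times> {..<d}. if p = (a,b) then cnj (W $$ (a,b)) else 0)"
      unfolding trace_dagger_mult[OF W Emat_carrier] by (intro sum.cong refl) (auto simp: Emat_def split: if_splits)
    also have "\<dots> = cnj (W $$ (a,b))" using ab assms(2) by simp
    finally show ?thesis .
  qed
  have "cnj (Z $$ (a,b)) = cnj (Z' $$ (a,b))"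
    using key[OF assms(1)] key[OF assms(2)] assms(3) Emat_carrier by metis
  then show "Z $$ (a,b) = Z' $$ (a,b)" by simp
qed (use assms in auto)

lemma hs_adjoint_prop:
  assumes F: "cptp n F" and Y: "Y \<in> carrier_mat (2^n) (2^n)"
  shows "hs_adjoint n F Y \<in> carrier_mat (2^n) (2^n) \<and>
    (\<forall>X \<in> carrier_mat (2^n) (2^n). trace (dagger (hs_adjoint n F Y) * X) = trace (dagger Y * F X))"
proof -
  let ?d = "2^n :: nat"
  have Fc: "\<And>X. X \<in> carrier_mat ?d ?d \<Longrightarrow> F X \<in> carrier_mat ?d ?d" using F by (simp add: cptp_def)
  have dY: "dagger Y \<in> carrier_mat ?d ?d" using Y by (simp add: dagger_def)
  have "\<exists>Z \<in> carrier_mat ?d ?d. \<forall>X \<in> carrier_mat ?d ?d. trace (dagger Y * F X) = trace (dagger Z * X)"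
  proof (rule lin_rep)
    fix X X' :: "complex mat" assume X: "X \<in> carrier_mat ?d ?d" "X' \<in> carrier_mat ?d ?d"
    have "F (X + X') = F X + F X'" using F X by (simp add: cptp_def)
    moreover have "dagger Y * (F X + F X') = dagger Y * F X + dagger Y * F X'"
      by (rule mult_add_distrib_mat) (use X Fc dY in auto)
    ultimately show "trace (dagger Y * F (X + X')) = trace (dagger Y * F X) + trace (dagger Y * F X')"
      using X Fc dY by (simp add: trace_add[where d = ?d])
  next
    fix X :: "complex mat" and c assume X: "X \<in> carrier_mat ?d ?d"
    have "F (c \<cdot>\<^sub>m X) = c \<cdot>\<^sub>m F X" using F X by (simp add: cptp_def)
    moreover have "dagger Y * (c \<cdot>\<^sub>m F X) = c \<cdot>\<^sub>m (dagger Y * F X)"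
      by (rule mult_smult_distrib) (use X Fc dY in auto)
    ultimately show "trace (dagger Y * F (c \<cdot>\<^sub>m X)) = c * trace (dagger Y * F X)"
      using X Fc dY by (simp add: trace_smult[where d = ?d])
  qed
  then obtain Z where Z: "Z \<in> carrier_mat ?d ?d" "\<forall>X \<in> carrier_mat ?d ?d. trace (dagger Z * X) = trace (dagger Y * F X)"
    by auto
  have "\<exists>!Z. Z \<in> carrier_mat ?d ?d \<and> (\<forall>X \<in> carrier_mat ?d ?d. trace (dagger Z * X) = trace (dagger Y * F X))"
  proof (rule ex1I)
    show "Z \<in> carrier_mat ?d ?d \<and> (\<forall>X \<in> carrier_mat ?d ?d. trace (dagger Z * X) = trace (dagger Y * F X))" using Z by auto
  next
    fix Z' assume "Z' \<in> carrier_mat ?d ?d \<and> (\<forall>X \<in> carrier_mat ?d ?d. trace (dagger Z' * X) = trace (dagger Y * F X))"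
    then show "Z' = Z" using Z by (intro rep_unique[where d = ?d]) auto
  qed
  then show ?thesis unfolding hs_adjoint_def by (rule theI')
qed

lemma chain_carrier:
  assumes "\<forall>j<r. cptp n (Es j)" "X \<in> carrier_mat (2^n) (2^n)"
  shows "chain Es r X \<in> carrier_mat (2^n) (2^n)"
  using assms by (induction r) (auto simp: cptp_def)

lemma chain_trace:
  assumes "\<forall>j<r. cptp n (Es j)" "X \<in> carrier_mat (2^n) (2^n)"
  shows "trace (chain Es r X) = trace X"
  using assms
proof (induction r)
  case (Suc r)
  then have "chain Es r X \<in> carrier_mat (2^n) (2^n)" by (intro chain_carrier) auto
  then show ?case using Suc by (auto simp: cptp_def)
qed simp

lemma adj_chain_prop:
  assumes "\<forall>j<r. cptp n (Es j)"
  shows "Y \<in> carrier_mat (2^n) (2^n) \<Longrightarrow> adj_chain n Es r Y \<in> carrier_mat (2^n) (2^n) \<and>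
    (\<forall>X \<in> carrier_mat (2^n) (2^n). trace (dagger (adj_chain n Es r Y) * X) = trace (dagger Y * chain Es r X))"
  using assms
proof (induction r arbitrary: Y)
  case 0 then show ?case by simp
next
  case (Suc r)
  have cp: "cptp n (Es r)" using Suc by auto
  note H = hs_adjoint_prop[OF cp Suc.prems(1)]
  have IH: "adj_chain n Es r (hs_adjoint n (Es r) Y) \<in> carrier_mat (2^n) (2^n) \<and>
    (\<forall>X \<in> carrier_mat (2^n) (2^n). trace (dagger (adj_chain n Es r (hs_adjoint n (Es r) Y)) * X)
       = trace (dagger (hs_adjoint n (Es r) Y) * chain Es r X))"
    using H Suc by (intro Suc.IH) auto
  show ?case
  proof (intro conjI ballI)
    show "adj_chain n Es (Suc r) Y \<in> carrier_mat (2^n) (2^n)" using IH by simp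
    fix X :: "complex mat" assume X: "X \<in> carrier_mat (2^n) (2^n)"
    have c: "chain Es r X \<in> carrier_mat (2^n) (2^n)" using Suc X by (intro chain_carrier) auto
    show "trace (dagger (adj_chain n Es (Suc r) Y) * X) = trace (dagger Y * chain Es (Suc r) X)"
      using IH X H c by simp
  qed
qed

lemma sum_two:
  fixes f :: "nat \<Rightarrow> complex"
  assumes "i < d" "j < d" "i \<noteq> j"
  shows "(\<Sum>k<d. f k * ((if k = i then a else 0) + (if k = j then b else 0))) = f i * a + f j * b"
proof -
  have "(\<Sum>k<d. f k * ((if k = i then a else 0) + (if k = j then b else 0)))
      = (\<Sum>k<d. (if k = i then f i * a else 0)) + (\<Sum>k<d. (if k = j then f j * b else 0))"
    unfolding sum.distrib[symmetric] by (intro sum.cong refl) (use assms in auto)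
  then show ?thesis using assms by simp
qed

lemma sum_two':
  fixes f :: "nat \<Rightarrow> complex"
  assumes "i < d" "j < d" "i \<noteq> j"
  shows "(\<Sum>k<d. ((if k = i then a else 0) + (if k = j then b else 0)) * f k) = a * f i + b * f j"
  using sum_two[OF assms, of f a b] by (simp add: mult.commute)

lemma quad_two:
  fixes a b :: complex
  assumes A: "A \<in> carrier_mat d d" and ij: "i < d" "j < d" "i \<noteq> j"
  defines "v \<equiv> vec d (\<lambda>k. (if k = i then a else 0) + (if k = j then b else 0))"
  shows "(\<Sum>p<dim_row A. \<Sum>q<dim_row A. cnj (v $ p) * A $$ (p, q) * v $ q)
    = cnj a * (A $$ (i,i) * a + A $$ (i,j) * b) + cnj b * (A $$ (j,i) * a + A $$ (j,j) * b)"
proof -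
  have "(\<Sum>p<dim_row A. \<Sum>q<dim_row A. cnj (v $ p) * A $$ (p, q) * v $ q)
      = (\<Sum>p<d. cnj (v $ p) * (\<Sum>q<d. A $$ (p, q) * ((if q = i then a else 0) + (if q = j then b else 0))))"
    using A by (simp add: v_def sum_distrib_left mult.assoc)
  also have "\<dots> = (\<Sum>p<d. ((if p = i then cnj a else 0) + (if p = j then cnj b else 0)) * (A $$ (p,i) * a + A $$ (p,j) * b))"
    by (intro sum.cong refl) (simp add: sum_two[OF ij] v_def)
  also have "\<dots> = cnj a * (A $$ (i,i) * a + A $$ (i,j) * b) + cnj b * (A $$ (j,i) * a + A $$ (j,j) * b)"
    by (rule sum_two'[OF ij])
  finally show ?thesis .
qed

lemma quad_one:
  assumes A: "A \<in> carrier_mat d d" and i: "i < d"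
  defines "v \<equiv> vec d (\<lambda>k. if k = i then 1 else 0)"
  shows "(\<Sum>p<dim_row A. \<Sum>q<dim_row A. cnj (v $ p) * A $$ (p, q) * v $ q) = A $$ (i,i)"
proof -
  have "(\<Sum>p<dim_row A. \<Sum>q<dim_row A. cnj (v $ p) * A $$ (p, q) * v $ q)
      = (\<Sum>p<d. \<Sum>q<d. if p = i \<and> q = i then A $$ (i,i) else 0)"
    using A by (intro sum.cong refl) (auto simp: v_def)
  also have "\<dots> = (\<Sum>p<d. if p = i then A $$ (i,i) else 0)"
    by (intro sum.cong refl) auto
  finally show ?thesis using i by simp
qed

lemma psd_diag:
  assumes "psd A" "A \<in> carrier_mat d d" "i < d"
  shows "Im (A $$ (i,i)) = 0 \<and> Re (A $$ (i,i)) \<ge> 0"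
proof -
  let ?v = "vec d (\<lambda>k. if k = i then 1 else 0) :: complex vec"
  have "?v \<in> carrier_vec (dim_row A)" using assms by simp
  then have "Im (\<Sum>p<dim_row A. \<Sum>q<dim_row A. cnj (?v $ p) * A $$ (p, q) * ?v $ q) = 0 \<and> Re (\<Sum>p<dim_row A. \<Sum>q<dim_row A. cnj (?v $ p) * A $$ (p, q) * ?v $ q) \<ge> 0"
    using assms(1) unfolding psd_def Let_def by blast
  then show ?thesis unfolding quad_one[OF assms(2,3)] .
qed

lemma psd_herm:
  assumes "psd A" "A \<in> carrier_mat d d" "i < d" "j < d"
  shows "A $$ (i,j) = cnj (A $$ (j,i))"
proof (cases "i = j")
  case True then show ?thesis using psd_diag[OF assms(1,2,3)] by (simp add: complex_eq_iff)
next
  case False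
  have q: "Im (cnj a * (A $$ (i,i) * a + A $$ (i,j) * b) + cnj b * (A $$ (j,i) * a + A $$ (j,j) * b)) = 0" for a b
  proof -
    let ?v = "vec d (\<lambda>k. (if k = i then a else 0) + (if k = j then b else 0))"
    have "?v \<in> carrier_vec (dim_row A)" using assms by simp
    then have "Im (\<Sum>p<dim_row A. \<Sum>q<dim_row A. cnj (?v $ p) * A $$ (p, q) * ?v $ q) = 0"
      using assms(1) unfolding psd_def Let_def by blast
    then show ?thesis unfolding quad_two[OF assms(2,3,4) False] .
  qed
  have di: "Im (A $$ (i,i)) = 0" "Im (A $$ (j,j)) = 0" using psd_diag assms by auto
  have 1: "Im (A $$ (i,j)) + Im (A $$ (j,i)) = 0" using q[of 1 1] di by simp
  have 2: "Re (A $$ (i,j)) - Re (A $$ (j,i)) = 0" using q[of 1 \<i>] di by (simp add: algebra_simps)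
  show ?thesis using 1 2 by (simp add: complex_eq_iff)
qed

lemma ampl_1:
  assumes "X \<in> carrier_mat d d" "F X \<in> carrier_mat d d"
  shows "ampl 1 d F X = F X"
proof -
  have inner: "mat d d (\<lambda>(k, l). X $$ ((p div d) * d + k, (q div d) * d + l)) = X" if "p < d" "q < d" for p q
    by (rule eq_matI) (use assms that in auto)
  show ?thesis
    by (rule eq_matI) (use assms inner in \<open>auto simp: ampl_def\<close>)
qed

lemma cptp_psd:
  assumes "cptp n F" "X \<in> carrier_mat (2^n) (2^n)" "psd X"
  shows "psd (F X)"
proof -
  have "F X \<in> carrier_mat (2^n) (2^n)" using assms by (simp add: cptp_def)
  then have "ampl 1 (2^n) F X = F X" using ampl_1 assms(2) by blast
  moreover have "psd (ampl 1 (2^n) F X)" using assms unfolding cptp_def by (metis mult_1)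
  ultimately show ?thesis by simp
qed

lemma trace_herm:
  assumes "A \<in> carrier_mat d d" "M \<in> carrier_mat d d" "\<And>i j. i < d \<Longrightarrow> j < d \<Longrightarrow> M $$ (i,j) = cnj (M $$ (j,i))"
  shows "trace (A * M) = cnj (trace (dagger A * M))"
proof -
  have "trace (A * M) = (\<Sum>i<d. \<Sum>k<d. A $$ (i,k) * M $$ (k,i))"
    using assms(1,2) by (simp add: trace_def scalar_prod_def lessThan_atLeast0)
  also have "\<dots> = (\<Sum>i<d. \<Sum>k<d. A $$ (i,k) * cnj (M $$ (i,k)))"
    proof (intro sum.cong refl)
      fix i k assume "i \<in> {..<d}" "k \<in> {..<d}"
      then show "A $$ (i,k) * M $$ (k,i) = A $$ (i,k) * cnj (M $$ (i,k))" using assms(3)[of k i] by simp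
    qed
  also have "\<dots> = (\<Sum>p\<in>{..<d} \<times> {..<d}. A $$ p * cnj (M $$ p))"
    by (simp add: sum.cartesian_product split_def)
  also have "\<dots> = cnj (\<Sum>p\<in>{..<d} \<times> {..<d}. cnj (A $$ p) * M $$ p)"
    by simp
  also have "\<dots> = cnj (trace (dagger A * M))" using trace_dagger_mult[OF assms(1,2)] by simp
  finally show ?thesis .
qed
lemma chain_fix: "\<forall>j<r. Es j G = G \<Longrightarrow> chain Es r G = G"
  by (induction r) auto

lemma chain_id: "chain (\<lambda>_. id) r = id"
  by (induction r) auto

lemma chain_psd:
  assumes "\<forall>j<r. cptp n (Es j)" "X \<in> carrier_mat (2^n) (2^n)" "psd X"
  shows "psd (chain Es r X)"
  using assms
proof (induction r)
  case (Suc r)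
  then have "chain Es r X \<in> carrier_mat (2^n) (2^n)" by (intro chain_carrier) auto
  then show ?case using Suc cptp_psd[of n "Es r" "chain Es r X"] by auto
qed simp

lemma cW_prod: "(\<Prod>i<n. cW W i (b i)) = (if \<forall>i<n. cW W i (b i) = 1 then 1 else 0)"
proof (cases "\<forall>i<n. cW W i (b i) = 1")
  case True then show ?thesis by simp
next
  case False
  then obtain i where "i < n" "cW W i (b i) \<noteq> 1" by auto
  then have "cW W i (b i) = 0" by (auto simp: cW_def split: if_splits)
  then have "(\<Prod>i<n. cW W i (b i)) = 0" using \<open>i < n\<close> by (intro prod_zero) auto
  then show ?thesis using False by simp
qed

lemma trace_PW_le:
  assumes "\<sigma> \<in> carrier_mat (2^n) (2^n)" "psd \<sigma>" "trace \<sigma> = 1"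
  shows "Re (trace (PW n W * \<sigma>)) \<le> 1"
proof -
  have "Re (trace (PW n W * \<sigma>)) = (\<Sum>k<2^n. Re ((\<Prod>i<n. cW W i (qbit i k)) * \<sigma> $$ (k,k)))"
    unfolding trace_PW[OF assms(1)] by simp
  also have "\<dots> \<le> (\<Sum>k<2^n. Re (\<sigma> $$ (k,k)))"
  proof (rule sum_mono)
    fix k assume k: "k \<in> {..<(2::nat)^n}"
    have "Re (\<sigma> $$ (k,k)) \<ge> 0" using psd_diag[OF assms(2,1)] k by auto
    then show "Re ((\<Prod>i<n. cW W i (qbit i k)) * \<sigma> $$ (k,k)) \<le> Re (\<sigma> $$ (k,k))"
      unfolding cW_prod by auto
  qed
  also have "\<dots> = Re (trace \<sigma>)" using assms(1) by (simp add: trace_def)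
  finally show ?thesis using assms(3) by simp
qed

lemma K:
  assumes cp: "\<forall>j<r. cptp n (Es j)" and fx: "\<forall>j<r. Es j (Gamma n \<beta> E) = Gamma n \<beta> E"
    and W: "W \<subseteq> {..<n}" and rho: "is_state n \<rho>"
  shows "Re (trace (adj_chain n Es r (PW n W) * Gamma n \<beta> E)) = (\<Prod>i\<in>W. 1 + exp (- \<beta> * E i))"
    and "Re (trace (adj_chain n Es r (PW n W) * \<rho>)) = Re (resets n W (chain Es r \<rho>) $$ (0,0))"
    and "Re (trace (adj_chain n Es r (PW n W) * \<rho>)) \<le> 1"
proof -
  note AC = adj_chain_prop[OF cp PW_carrier[of n W]]
  let ?Q = "adj_chain n Es r (PW n W)"
  have Qc: "?Q \<in> carrier_mat (2^n) (2^n)" using AC by blast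
  have rc: "\<rho> \<in> carrier_mat (2^n) (2^n)" "psd \<rho>" "trace \<rho> = 1" using rho by (auto simp: is_state_def)
  have sc: "chain Es r \<rho> \<in> carrier_mat (2^n) (2^n)" using chain_carrier[OF cp rc(1)] .
  have G: "trace (?Q * Gamma n \<beta> E) = cnj (trace (PW n W * Gamma n \<beta> E))"
    using trace_herm[OF Qc Gamma_carrier Gamma_herm] AC Gamma_carrier chain_fix[of r Es "Gamma n \<beta> E", OF fx]
    by (simp add: PW_dagger)
  show "Re (trace (?Q * Gamma n \<beta> E)) = (\<Prod>i\<in>W. 1 + exp (- \<beta> * E i))"
    unfolding G trace_PW_Gamma[OF W] by (simp only: complex_cnj_complex_of_real Re_complex_of_real)
  have R: "trace (?Q * \<rho>) = cnj (trace (PW n W * chain Es r \<rho>))"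
    using trace_herm[OF Qc rc(1) psd_herm[OF rc(2,1)]] AC rc(1) by (simp add: PW_dagger)
  show "Re (trace (?Q * \<rho>)) = Re (resets n W (chain Es r \<rho>) $$ (0,0))"
    unfolding R resets_trace[OF W sc] by simp
  have "Re (trace (PW n W * chain Es r \<rho>)) \<le> 1"
    using trace_PW_le[OF sc chain_psd[OF cp rc(1,2)]] chain_trace[OF cp rc(1)] rc(3) by simp
  then show "Re (trace (?Q * \<rho>)) \<le> 1" unfolding R by simp
qed

lemma PW_P0: "PW n W \<in> P0 n"
proof -
  have "\<forall>i<n. (\<lambda>i. if i \<in> W then 1\<^sub>m 2 else proj0) i = proj0 \<or> (\<lambda>i. if i \<in> W then 1\<^sub>m 2 else proj0) i = 1\<^sub>m 2"
    by simp
  then show ?thesis unfolding P0_def PW_def by blast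
qed

lemma tensor_cong: "(\<And>i. i < n \<Longrightarrow> Qf i = Qg i) \<Longrightarrow> tensor_qubits n Qf = tensor_qubits n Qg"
  unfolding tensor_qubits_def by (rule eq_matI) (auto intro!: prod.cong)

lemma P0_PW: assumes "P \<in> P0 n" shows "\<exists>W. W \<subseteq> {..<n} \<and> P = PW n W"
proof -
  have "\<exists>Qf. P = tensor_qubits n Qf \<and> (\<forall>i<n. Qf i = proj0 \<or> Qf i = 1\<^sub>m 2)"
    using assms unfolding P0_def mem_Collect_eq .
  then obtain Qf where P: "P = tensor_qubits n Qf" and Q: "\<forall>i<n. Qf i = proj0 \<or> Qf i = 1\<^sub>m 2"
    by blast
  define W where "W = {i. i < n \<and> Qf i = 1\<^sub>m 2}"
  have "W \<subseteq> {..<n}" unfolding W_def by auto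
  moreover have "P = PW n W"
    unfolding P PW_def
  proof (rule tensor_cong)
    fix i assume i: "i < n"
    show "Qf i = (if i \<in> W then 1\<^sub>m 2 else proj0)"
    proof (cases "Qf i = 1\<^sub>m 2")
      case True then have "i \<in> W" using i unfolding W_def by blast
      then show ?thesis using True by (simp only: if_True)
    next
      case False then have "i \<notin> W" unfolding W_def by blast
      moreover have "Qf i = proj0" using Q i False by blast
      ultimately show ?thesis by (simp only: if_False)
    qed
  qed
  ultimately show ?thesis by blast
qed

theorem theoremE1:
  fixes n r :: nat and \<beta> \<eta> :: real and E :: "nat \<Rightarrow> real"
    and T :: "(complex mat \<Rightarrow> complex mat) set" and \<rho> :: "complex mat"
  assumes "\<forall>i<n. E i \<ge> 0"
    and "\<beta> > 0"
    and "id \<in> T"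
    and "\<forall>F\<in>T. cptp n F \<and> F (Gamma n \<beta> E) = Gamma n \<beta> E"
    and "is_state n \<rho>"
    and "0 < \<eta>" and "\<eta> \<le> 1"
  shows "\<beta> * W_star n \<beta> E T r \<eta> \<rho> = - D_h n T r \<eta> \<rho> (Gamma n \<beta> E)
    \<and> - D_H n T r \<eta> \<rho> (Gamma n \<beta> E) - ln (1 / \<eta>) \<le> \<beta> * W_star n \<beta> E T r \<eta> \<rho>
    \<and> \<beta> * W_star n \<beta> E T r \<eta> \<rho> \<le> - D_H n T r \<eta> \<rho> (Gamma n \<beta> E)"
proof -
  note bpos = assms(2) and idT = assms(3) and TT = assms(4) and rho = assms(5) and eta = assms(6,7)
  define g where "g i = 1 + exp (- \<beta> * E i)" for i
  define f where "f W = (\<Sum>i\<in>W. ln (g i))" for W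
  have gpos: "g i > 0" for i unfolding g_def by (simp add: add_pos_pos)
  have KK: "Re (trace (adj_chain n Es r (PW n W) * Gamma n \<beta> E)) = exp (f W)
      \<and> Re (trace (adj_chain n Es r (PW n W) * \<rho>)) = Re (resets n W (chain Es r \<rho>) $$ (0,0))
      \<and> Re (trace (adj_chain n Es r (PW n W) * \<rho>)) \<le> 1"
    if Es: "\<forall>j<r. Es j \<in> T" and W: "W \<subseteq> {..<n}" for Es W
  proof -
    have cp: "\<forall>j<r. cptp n (Es j)" and fx: "\<forall>j<r. Es j (Gamma n \<beta> E) = Gamma n \<beta> E"
      using Es TT by auto
    have fW: "finite W" using W finite_subset by blast
    have "(\<Prod>i\<in>W. 1 + exp (- \<beta> * E i)) = exp (f W)"
      unfolding f_def exp_sum[OF fW] using gpos by (simp add: g_def)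
    then show ?thesis using K[OF cp fx W rho] by simp
  qed
  define good where "good = {W. W \<subseteq> {..<n} \<and> (\<exists>Es. (\<forall>j<r. Es j \<in> T) \<and> \<eta> \<le> Re (resets n W (chain Es r \<rho>) $$ (0,0)))}"
  have fin: "finite good" by (rule finite_subset[of _ "Pow {..<n}"]) (auto simp: good_def)
  have full: "{..<n} \<in> good"
  proof -
    have rc: "\<rho> \<in> carrier_mat (2^n) (2^n)" "trace \<rho> = 1" using rho by (auto simp: is_state_def)
    have "resets n {..<n} (chain (\<lambda>_. id) r \<rho>) $$ (0,0) = trace (PW n {..<n} * \<rho>)"
      using resets_trace[OF _ rc(1), of "{..<n}"] by (simp add: chain_id)
    also have "\<dots> = (\<Sum>k<2^n. \<rho> $$ (k,k))" unfolding trace_PW[OF rc(1)] by (simp add: cW_def)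
    also have "\<dots> = 1" using rc by (simp add: trace_def)
    finally show ?thesis unfolding good_def using idT eta by (intro CollectI conjI exI[of _ "\<lambda>_. id"]) auto
  qed
  define S where "S = f ` good"
  have Sfin: "finite S" and Sne: "S \<noteq> {}" using fin full by (auto simp: S_def)
  define m where "m = Min S"
  obtain W0 where W0: "W0 \<in> good" "f W0 = m" using Min_in[OF Sfin Sne] unfolding m_def S_def by auto
  have mle: "W \<in> good \<Longrightarrow> m \<le> f W" for W unfolding m_def using Sfin by (intro Min_le) (auto simp: S_def)

  have Aset: "{(1 / \<beta>) * (\<Sum>i\<in>W. ln (Re (trace (gamma_q \<beta> (E i))))) | W Es.
      W \<subseteq> {..<n} \<and> (\<forall>j<r. Es j \<in> T) \<and> Re ((resets n W \<circ> chain Es r) \<rho> $$ (0, 0)) \<ge> \<eta>}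
      = (\<lambda>s. (1 / \<beta>) * s) ` S"
    unfolding S_def good_def f_def g_def trace_gamma_q by auto
  have Bset: "{Re (trace (Q * Gamma n \<beta> E)) | Q. Q \<in> Mr n T r \<and> Re (trace (Q * \<rho>)) \<ge> \<eta>} = exp ` S"
  proof (intro equalityI subsetI)
    fix x assume "x \<in> {Re (trace (Q * Gamma n \<beta> E)) | Q. Q \<in> Mr n T r \<and> Re (trace (Q * \<rho>)) \<ge> \<eta>}"
    then obtain Es P where x: "x = Re (trace (adj_chain n Es r P * Gamma n \<beta> E))"
      and Es: "\<forall>j<r. Es j \<in> T" and P: "P \<in> P0 n" and c: "Re (trace (adj_chain n Es r P * \<rho>)) \<ge> \<eta>"
      unfolding Mr_def by blast
    obtain W where W: "W \<subseteq> {..<n}" "P = PW n W" using P0_PW[OF P] by blast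
    have "W \<in> good" unfolding good_def using W Es c KK[OF Es W(1)] by auto
    then show "x \<in> exp ` S" unfolding S_def using x W KK[OF Es W(1)] by auto
  next
    fix x assume "x \<in> exp ` S"
    then obtain W where W: "W \<in> good" and x: "x = exp (f W)" unfolding S_def by auto
    then obtain Es where Es: "\<forall>j<r. Es j \<in> T" and c: "\<eta> \<le> Re (resets n W (chain Es r \<rho>) $$ (0,0))"
      and Wn: "W \<subseteq> {..<n}" unfolding good_def by auto
    have Q: "adj_chain n Es r (PW n W) \<in> Mr n T r" unfolding Mr_def using Es PW_P0 by blast
    show "x \<in> {Re (trace (Q * Gamma n \<beta> E)) | Q. Q \<in> Mr n T r \<and> Re (trace (Q * \<rho>)) \<ge> \<eta>}"
      using Q KK[OF Es Wn] c x by force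
  qed
  let ?C = "{Re (trace (Q * Gamma n \<beta> E)) / Re (trace (Q * \<rho>)) | Q. Q \<in> Mr n T r \<and> Re (trace (Q * \<rho>)) \<ge> \<eta>}"
  have C1: "\<exists>W\<in>good. \<exists>x. \<eta> \<le> x \<and> x \<le> 1 \<and> c = exp (f W) / x" if cC: "c \<in> ?C" for c
  proof -
    obtain Es P where c: "c = Re (trace (adj_chain n Es r P * Gamma n \<beta> E)) / Re (trace (adj_chain n Es r P * \<rho>))"
      and Es: "\<forall>j<r. Es j \<in> T" and P: "P \<in> P0 n" and cc: "Re (trace (adj_chain n Es r P * \<rho>)) \<ge> \<eta>"
      using cC unfolding Mr_def by blast
    obtain W where W: "W \<subseteq> {..<n}" "P = PW n W" using P0_PW[OF P] by blast
    have "W \<in> good" unfolding good_def using W Es cc KK[OF Es W(1)] by auto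
    moreover have "\<eta> \<le> Re (trace (adj_chain n Es r P * \<rho>)) \<and> Re (trace (adj_chain n Es r P * \<rho>)) \<le> 1 \<and>
      c = exp (f W) / Re (trace (adj_chain n Es r P * \<rho>))"
      using c cc W KK[OF Es W(1)] by auto
    ultimately show ?thesis by blast
  qed
  have C2: "\<exists>x. \<eta> \<le> x \<and> exp (f W) / x \<in> ?C" if W: "W \<in> good" for W
  proof -
    obtain Es where Es: "\<forall>j<r. Es j \<in> T" and c: "\<eta> \<le> Re (resets n W (chain Es r \<rho>) $$ (0,0))"
      and Wn: "W \<subseteq> {..<n}" using W unfolding good_def by auto
    have Q: "adj_chain n Es r (PW n W) \<in> Mr n T r" unfolding Mr_def using Es PW_P0 by blast
    show ?thesis using Q KK[OF Es Wn] c by force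
  qed

  have mono1: "mono (\<lambda>s::real. (1 / \<beta>) * s)" using bpos by (intro monoI) (simp add: divide_right_mono)
  have mono2: "mono (exp :: real \<Rightarrow> real)" by (intro monoI) simp
  have WS: "W_star n \<beta> E T r \<eta> \<rho> = (1 / \<beta>) * m"
    unfolding W_star_def Aset m_def
    using cInf_eq_Min[of "(\<lambda>s. (1 / \<beta>) * s) ` S"] Sfin Sne mono_Min_commute[OF mono1 Sfin Sne] by simp
  have bW: "\<beta> * W_star n \<beta> E T r \<eta> \<rho> = m" using WS bpos by simp
  have IB: "Inf (exp ` S) = exp m" unfolding m_def
    using cInf_eq_Min[of "exp ` S"] Sfin Sne mono_Min_commute[OF mono2 Sfin Sne] by simp
  have Dh: "D_h n T r \<eta> \<rho> (Gamma n \<beta> E) = - m"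
    unfolding D_h_def Bset IB by simp
  define M where "M = exp m"
  have Mpos: "M > 0" unfolding M_def by simp
  have Cne: "?C \<noteq> {}" using C2[OF W0(1)] by blast
  have Clow: "M \<le> c" if cC: "c \<in> ?C" for c
  proof -
    obtain W x where W: "W \<in> good" and x: "\<eta> \<le> x" "x \<le> 1" and c: "c = exp (f W) / x" using C1[OF cC] by blast
    have "M \<le> exp (f W)" unfolding M_def using mle[OF W] by simp
    also have "exp (f W) \<le> exp (f W) / x" using x eta by (simp add: le_divide_eq)
    finally show ?thesis using c by simp
  qed
  have bdd: "bdd_below ?C" using Clow by (intro bdd_belowI) 
  have InfC1: "M \<le> Inf ?C" using Cne Clow by (intro cInf_greatest) auto
  obtain x0 where x0: "\<eta> \<le> x0" "exp (f W0) / x0 \<in> ?C" using C2[OF W0(1)] by blast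
  have "Inf ?C \<le> M / x0" using cInf_lower[OF x0(2) bdd] W0(2) unfolding M_def by simp
  also have "\<dots> \<le> M / \<eta>" using x0 eta Mpos by (intro divide_left_mono) auto
  finally have InfC2: "Inf ?C \<le> M / \<eta>" .
  define IC where "IC = Inf ?C"
  have DH: "- D_H n T r \<eta> \<rho> (Gamma n \<beta> E) = ln IC" unfolding D_H_def IC_def by (simp only: minus_minus)
  have lnM: "ln M = m" unfolding M_def by simp
  have l1: "m \<le> ln IC" unfolding lnM[symmetric] IC_def using InfC1 Mpos by (subst ln_le_cancel_iff) auto
  have "ln IC \<le> ln (M / \<eta>)" unfolding IC_def using InfC1 InfC2 Mpos eta by (subst ln_le_cancel_iff) auto
  also have "\<dots> = m - ln \<eta>" using eta Mpos lnM by (simp add: ln_div)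
  finally have l2: "ln IC - ln (1 / \<eta>) \<le> m" using eta by (simp add: ln_div)
  show ?thesis unfolding bW Dh DH using l1 l2 by linarith
qed

end
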